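(* Let $k\ge1$ and $W\in\mathbb{R}^{m\times n}$ with $\mathrm{rank}(W)\le k$. Define $$\mathcal{F}_k(W)=\min_{\substack{U\in\mathbb{R}^{m\times k},\,V\in\mathbb{R}^{n\times k}\\ UV^\top=W}}\sum_{j=1}^k\|u_j\|_2^2\,\|v_j\|_2^2,$$ where $u_j,v_j$ are the $j$-th columns of $U,V$. Then $\mathcal{F}_k(W)=\frac1k\|W\|_\star^2$. Moreover, any minimizer $(U,V)$ satisfies $\|u_j\|_2\|v_j\|_2=\frac1k\|W\|_\star$ for all $j\in\{1,\dots,k\}$ and $\sum_{j=1}^k\|u_j\|_2\|v_j\|_2=\|W\|_\star$.
   Context: $\|\cdot\|_\star$ denotes the nuclear norm (sum of singular values); $\|\cdot\|_2$ the Euclidean norm. *)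

theory Defs
  imports "HOL-Analysis.Analysis"
begin

definition outer :: "real^'m \<Rightarrow> real^'n \<Rightarrow> real^'n^'m" where
  "outer p q = (\<chi> i j. p $ i * q $ j)"

definition is_svd :: "real^'n^'m \<Rightarrow> nat \<Rightarrow> (nat \<Rightarrow> real) \<Rightarrow> (nat \<Rightarrow> real^'m) \<Rightarrow> (nat \<Rightarrow> real^'n) \<Rightarrow> bool" where
  "is_svd W r s P Q \<longleftrightarrow>
     (\<forall>i<r. s i > 0) \<and>
     (\<forall>i<r. \<forall>j<r. P i \<bullet> P j = (if i = j then 1 else 0)) \<and>
     (\<forall>i<r. \<forall>j<r. Q i \<bullet> Q j = (if i = j then 1 else 0)) \<and>
     W = (\<Sum>i<r. s i *\<^sub>R outer (P i) (Q i))"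

definition nuclear_norm :: "real^'n^'m \<Rightarrow> real" where
  "nuclear_norm W = (THE t. \<exists>r s P Q. is_svd W r s P Q \<and> t = (\<Sum>i<r. s i))"

definition obj :: "real^'k^'m \<Rightarrow> real^'k^'n \<Rightarrow> real" where
  "obj U V = (\<Sum>j\<in>UNIV. (norm (column j U))\<^sup>2 * (norm (column j V))\<^sup>2)"

definition Fk :: "real^'n^'m \<Rightarrow> ('k::finite) itself \<Rightarrow> real" where
  "Fk W _ = Inf {obj (U :: real^'k^'m) (V :: real^'k^'n) | U V. U ** transpose V = W}"

end

theory Submission
  imports Defs
begin

lemma outer_mv: "outer p q *v y = (q \<bullet> y) *\<^sub>R p"
  by (simp add: outer_def matrix_vector_mult_def inner_vec_def vec_eq_iff sum_distrib_left mult_ac)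

lemma sum_mv: "(\<Sum>i\<in>I. A i) *v (y::real^'n) = (\<Sum>i\<in>I. A i *v y)"
  by (induction I rule: infinite_finite_induct) (auto simp: matrix_vector_mult_add_rdistrib)

lemma scaleR_mv: "(c *\<^sub>R A) *v (y::real^'n) = c *\<^sub>R (A *v y)"
  by (simp add: matrix_vector_mult_def vec_eq_iff sum_distrib_left mult_ac)

lemma orthonormal_sum_norm:
  fixes P :: "nat \<Rightarrow> 'a::real_inner"
  assumes "\<forall>i<r. \<forall>j<r. P i \<bullet> P j = (if i = j then 1 else 0)"
  shows "(\<Sum>i<r. c i *\<^sub>R P i) \<bullet> (\<Sum>i<r. c i *\<^sub>R P i) = (\<Sum>i<r. (c i)\<^sup>2)"
proof -
  have "(\<Sum>i<r. c i *\<^sub>R P i) \<bullet> (\<Sum>i<r. c i *\<^sub>R P i) = (\<Sum>i<r. c i * (\<Sum>j<r. c j * (P j \<bullet> P i)))"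
    by (simp add: inner_sum_left inner_sum_right)
  also have "\<dots> = (\<Sum>i<r. \<Sum>j<r. if i = j then c i * c j else 0)"
    unfolding sum_distrib_left using assms by (intro sum.cong refl) auto
  also have "\<dots> = (\<Sum>i<r. (c i)\<^sup>2)"
    by (simp add: power2_eq_square)
  finally show ?thesis .
qed

lemma bessel:
  fixes Q :: "nat \<Rightarrow> 'a::real_inner"
  assumes "\<forall>i<r. \<forall>j<r. Q i \<bullet> Q j = (if i = j then 1 else 0)"
  shows "sqrt (\<Sum>i<r. (v \<bullet> Q i)\<^sup>2) \<le> norm v"
proof -
  define w where "w = (\<Sum>i<r. (v \<bullet> Q i) *\<^sub>R Q i)"
  have 1: "w \<bullet> w = (\<Sum>i<r. (v \<bullet> Q i)\<^sup>2)"
    unfolding w_def by (rule orthonormal_sum_norm[OF assms])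
  have 2: "v \<bullet> w = (\<Sum>i<r. (v \<bullet> Q i)\<^sup>2)"
    unfolding w_def by (simp add: inner_sum_right power2_eq_square)
  have "norm w * norm w = v \<bullet> w" using 1 2 by (simp add: dot_square_norm power2_eq_square[symmetric])
  also have "\<dots> \<le> norm v * norm w" by (rule norm_cauchy_schwarz)
  finally have "norm w \<le> norm v"
    by (metis mult_right_le_imp_le mult_zero_right norm_ge_zero order_le_less)
  moreover have "norm w = sqrt (\<Sum>i<r. (v \<bullet> Q i)\<^sup>2)" using 1 by (simp add: norm_eq_sqrt_inner)
  ultimately show ?thesis by simp
qed

lemma pair_bound:
  fixes P :: "nat \<Rightarrow> 'a::real_inner" and Q :: "nat \<Rightarrow> 'b::real_inner"
  assumes "\<forall>i<r. \<forall>j<r. P i \<bullet> P j = (if i = j then 1 else 0)"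
    and "\<forall>i<r. \<forall>j<r. Q i \<bullet> Q j = (if i = j then 1 else 0)"
  shows "(\<Sum>i<r. (u \<bullet> P i) * (v \<bullet> Q i)) \<le> norm u * norm v"
proof -
  define w where "w = (\<Sum>i<r. (v \<bullet> Q i) *\<^sub>R P i)"
  have "(\<Sum>i<r. (u \<bullet> P i) * (v \<bullet> Q i)) = u \<bullet> w"
    unfolding w_def by (simp add: inner_sum_right mult_ac)
  also have "\<dots> \<le> norm u * norm w" by (rule norm_cauchy_schwarz)
  also have "norm w = sqrt (\<Sum>i<r. (v \<bullet> Q i)\<^sup>2)"
    using orthonormal_sum_norm[OF assms(1), of "\<lambda>i. v \<bullet> Q i"] by (simp add: norm_eq_sqrt_inner w_def)
  also have "norm u * \<dots> \<le> norm u * norm v"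
    by (intro mult_left_mono bessel assms(2)) simp
  finally show ?thesis .
qed

lemma svd_mv:
  assumes "is_svd W r s P Q" "i < r"
  shows "W *v Q i = s i *\<^sub>R P i"
proof -
  have "W *v Q i = (\<Sum>l<r. s l *\<^sub>R ((Q l \<bullet> Q i) *\<^sub>R P l))"
    using assms(1) unfolding is_svd_def by (simp add: sum_mv scaleR_mv outer_mv)
  also have "\<dots> = (\<Sum>l<r. if l = i then s i *\<^sub>R P i else 0)"
    using assms unfolding is_svd_def by (intro sum.cong refl) auto
  finally show ?thesis using assms(2) by simp
qed

lemma svd_lower:
  fixes u :: "'j \<Rightarrow> real^'m" and v :: "'j \<Rightarrow> real^'n"
  assumes "is_svd W r s P Q" "W = (\<Sum>j\<in>J. outer (u j) (v j))" "finite J"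
  shows "(\<Sum>i<r. s i) \<le> (\<Sum>j\<in>J. norm (u j) * norm (v j))"
proof -
  have "s i = (\<Sum>j\<in>J. (u j \<bullet> P i) * (v j \<bullet> Q i))" if "i < r" for i
  proof -
    have "s i = P i \<bullet> (W *v Q i)" using svd_mv[OF assms(1) that] assms(1) that
      by (simp add: is_svd_def)
    also have "\<dots> = (\<Sum>j\<in>J. (u j \<bullet> P i) * (v j \<bullet> Q i))"
      by (simp add: assms(2) sum_mv outer_mv inner_sum_right inner_commute mult_ac)
    finally show ?thesis .
  qed
  then have "(\<Sum>i<r. s i) = (\<Sum>j\<in>J. \<Sum>i<r. (u j \<bullet> P i) * (v j \<bullet> Q i))"
    by (simp add: sum.swap[of _ J])
  also have "\<dots> \<le> (\<Sum>j\<in>J. norm (u j) * norm (v j))"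
    using assms(1) unfolding is_svd_def by (intro sum_mono pair_bound) auto
  finally show ?thesis .
qed

lemma svd_left:
  assumes "is_svd W r s P Q" "i < r"
  shows "P i \<bullet> (W *v y) = s i * (Q i \<bullet> y)"
proof -
  have "P i \<bullet> (W *v y) = (\<Sum>l<r. s l * ((Q l \<bullet> y) * (P i \<bullet> P l)))"
    using assms(1) unfolding is_svd_def by (simp add: sum_mv scaleR_mv outer_mv inner_sum_right mult_ac)
  also have "\<dots> = (\<Sum>l<r. if l = i then s i * (Q i \<bullet> y) else 0)"
    using assms unfolding is_svd_def by (intro sum.cong refl) auto
  finally show ?thesis using assms(2) by simp
qed

lemma outer_scaleR_left: "outer (c *\<^sub>R p) q = c *\<^sub>R outer p q"
  by (simp add: outer_def vec_eq_iff)

lemma nuclear_eq: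
  assumes "is_svd W r s P Q"
  shows "nuclear_norm W = (\<Sum>i<r. s i)"
  unfolding nuclear_norm_def
proof (rule the_equality)
  show "\<exists>r' s' P' Q'. is_svd W r' s' P' Q' \<and> (\<Sum>i<r. s i) = (\<Sum>i<r'. s' i)"
    using assms by blast
next
  have key: "(\<Sum>i<r. s i) \<le> (\<Sum>i<r'. s' i)" if A: "is_svd W r s P Q" and B: "is_svd W r' s' P' Q'"
    for r s P Q r' s' P' Q'
  proof -
    have "W = (\<Sum>i<r'. outer (s' i *\<^sub>R P' i) (Q' i))"
      using B unfolding is_svd_def by (simp add: outer_scaleR_left)
    from svd_lower[OF A this] have "(\<Sum>i<r. s i) \<le> (\<Sum>i<r'. norm (s' i *\<^sub>R P' i) * norm (Q' i))"
      by simp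
    also have "\<dots> = (\<Sum>i<r'. s' i)"
    proof (intro sum.cong refl)
      fix i assume "i \<in> {..<r'}"
      then have "s' i > 0" "P' i \<bullet> P' i = 1" "Q' i \<bullet> Q' i = 1" using B unfolding is_svd_def by auto
      then show "norm (s' i *\<^sub>R P' i) * norm (Q' i) = s' i"
        by (simp add: norm_eq_sqrt_inner)
    qed
    finally show ?thesis .
  qed
  fix t assume "\<exists>r' s' P' Q'. is_svd W r' s' P' Q' \<and> t = (\<Sum>i<r'. s' i)"
  then obtain r' s' P' Q' where "is_svd W r' s' P' Q'" "t = (\<Sum>i<r'. s' i)" by blast
  then show "t = (\<Sum>i<r. s i)" using key[OF assms] key[OF _ assms] by (metis order_antisym)
qed

lemma quad_zero:
  fixes b c :: real
  assumes "\<forall>t. 2 * t * b \<le> t\<^sup>2 * c"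
  shows "b = 0"
proof (rule ccontr)
  assume "b \<noteq> 0"
  define d where "d = \<bar>c\<bar> + 1"
  have pos: "d > 0" by (simp add: d_def)
  define t where "t = b / d"
  have td: "t * d = b" using pos by (simp add: t_def)
  have "2 * t * b \<le> t\<^sup>2 * c" using assms by blast
  then have "2 * t * b * d\<^sup>2 \<le> t\<^sup>2 * c * d\<^sup>2"
    by (simp add: mult_right_mono)
  moreover have "2 * t * b * d\<^sup>2 = 2 * b * (t * d) * d" "t\<^sup>2 * c * d\<^sup>2 = (t * d) * (t * d) * c"
    by (simp_all add: power2_eq_square algebra_simps)
  ultimately have "2 * b * b * d \<le> b * b * c" by (simp add: td)
  moreover have "b * b * c \<le> b * b * \<bar>c\<bar>" by (simp add: mult_left_mono)
  moreover have "b * b > 0" using \<open>b \<noteq> 0\<close> by (metis not_real_square_gt_zero)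
  ultimately have "b * b * (2 * d) \<le> b * b * \<bar>c\<bar>" "b * b > 0" by (simp_all add: mult_ac)
  then have "2 * d \<le> \<bar>c\<bar>" by (simp add: mult_le_cancel_left_pos)
  then show False by (simp add: d_def)
qed

lemma svd_exists:
  fixes W :: "real^'n^'m"
  shows "\<exists>r s P Q. is_svd W r s P Q \<and> r \<le> rank W"
proof (induction "rank W" arbitrary: W rule: less_induct)
  case less
  show ?case
  proof (cases "W = 0")
    case True
    then have "is_svd W 0 (\<lambda>_. 0) (\<lambda>_. 0) (\<lambda>_. 0)" by (simp add: is_svd_def)
    then show ?thesis by blast
  next
    case False
    define S where "S = sphere (0::real^'n) 1"
    have "compact S" unfolding S_def by simp
    moreover have "axis undefined 1 \<in> S" by (simp add: S_def)
    then have "S \<noteq> {}" by blast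
    moreover have "continuous_on S (\<lambda>x. norm (W *v x))"
      by (intro continuous_on_norm linear_continuous_on) simp
    ultimately obtain x where xS: "x \<in> S" and xmax: "\<forall>y\<in>S. norm (W *v y) \<le> norm (W *v x)"
      using continuous_attains_sup by blast
    define \<sigma> where "\<sigma> = norm (W *v x)"
    have nx: "norm x = 1" using xS by (simp add: S_def)
    then have xx: "x \<bullet> x = 1" by (simp add: norm_eq_1)
    have bound: "norm (W *v z) \<le> \<sigma> * norm z" for z
    proof (cases "z = 0")
      case True then show ?thesis by simp
    next
      case False
      then have "(1 / norm z) *\<^sub>R z \<in> S" by (simp add: S_def)
      then have "norm (W *v ((1 / norm z) *\<^sub>R z)) \<le> \<sigma>" using xmax by (simp add: \<sigma>_def)
      then have "norm (W *v z) / norm z \<le> \<sigma>" by (simp add: matrix_vector_mult_scaleR divide_inverse mult.commute)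
      then show ?thesis using False by (simp add: divide_le_eq mult.commute)
    qed
    have \<sigma>pos: "\<sigma> > 0"
    proof (rule ccontr)
      assume "\<not> \<sigma> > 0"
      then have "W *v z = 0 *v z" for z using bound[of z]
        by (simp add: not_less) (metis mult_nonpos_nonneg norm_ge_zero norm_le_zero_iff order_trans)
      then have "W = 0" by (simp add: matrix_eq)
      with False show False by simp
    qed
    define p where "p = (1 / \<sigma>) *\<^sub>R (W *v x)"
    have Wx: "W *v x = \<sigma> *\<^sub>R p" using \<sigma>pos by (simp add: p_def)
    have pp: "p \<bullet> p = 1" using \<sigma>pos by (simp add: p_def \<sigma>_def dot_square_norm power2_eq_square)
    have orth: "(W *v x) \<bullet> (W *v y) = 0" if xy: "x \<bullet> y = 0" for y
    proof -
      have "2 * t * ((W *v x) \<bullet> (W *v y)) \<le> t\<^sup>2 * (\<sigma>\<^sup>2 * (y \<bullet> y) - (W *v y) \<bullet> (W *v y))" for t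
      proof -
        have "norm (W *v (x + t *\<^sub>R y)) \<le> \<sigma> * norm (x + t *\<^sub>R y)" by (rule bound)
        then have "(norm (W *v (x + t *\<^sub>R y)))\<^sup>2 \<le> (\<sigma> * norm (x + t *\<^sub>R y))\<^sup>2"
          by (intro power_mono) auto
        then have "(W *v x + t *\<^sub>R (W *v y)) \<bullet> (W *v x + t *\<^sub>R (W *v y)) \<le> \<sigma>\<^sup>2 * ((x + t *\<^sub>R y) \<bullet> (x + t *\<^sub>R y))"
          by (simp add: power2_norm_eq_inner power_mult_distrib matrix_vector_right_distrib matrix_vector_mult_scaleR)
        moreover have "(W *v x) \<bullet> (W *v x) = \<sigma>\<^sup>2" by (simp add: \<sigma>_def power2_norm_eq_inner)
        ultimately show ?thesis using xy xx
          by (simp add: inner_add_left inner_add_right inner_commute power2_eq_square algebra_simps)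
      qed
      then show ?thesis by (intro quad_zero) blast
    qed
    have pW: "p \<bullet> (W *v y) = \<sigma> * (x \<bullet> y)" for y
    proof -
      define y' where "y' = y - (x \<bullet> y) *\<^sub>R x"
      have "x \<bullet> y' = 0" using xx by (simp add: y'_def inner_diff_right)
      then have o: "(W *v x) \<bullet> (W *v y') = 0" by (rule orth)
      have "W *v y = W *v y' + (x \<bullet> y) *\<^sub>R (W *v x)"
        by (simp add: y'_def matrix_vector_mult_diff_distrib matrix_vector_mult_scaleR)
      then have "p \<bullet> (W *v y) = (1 / \<sigma>) * ((W *v x) \<bullet> (W *v y')) + (x \<bullet> y) * (1 / \<sigma>) * ((W *v x) \<bullet> (W *v x))"
        by (simp add: p_def inner_add_right)
      also have "\<dots> = \<sigma> * (x \<bullet> y)" using o \<sigma>pos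
        by (simp add: \<sigma>_def power2_norm_eq_inner[symmetric] power2_eq_square)
      finally show ?thesis .
    qed
    define W' where "W' = W - \<sigma> *\<^sub>R outer p x"
    have W'v: "W' *v y = W *v (y - (x \<bullet> y) *\<^sub>R x)" for y
      by (simp add: W'_def matrix_vector_mult_diff_rdistrib scaleR_mv outer_mv
          matrix_vector_mult_diff_distrib matrix_vector_mult_scaleR Wx inner_commute)
    have pW': "p \<bullet> (W' *v y) = 0" for y
      by (simp add: W'v pW inner_diff_right xx)
    have rank_lt: "rank W' < rank W"
    proof -
      have sub: "range (\<lambda>y. W' *v y) \<subseteq> range (\<lambda>y. W *v y)" using W'v by auto
      have "p = W *v ((1 / \<sigma>) *\<^sub>R x)" by (simp add: p_def matrix_vector_mult_scaleR)
      then have pin: "p \<in> span (range (\<lambda>y. W *v y))" by (intro span_base) blast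
      have "subspace (range (\<lambda>y. W' *v y))"
        using linear_subspace_image[OF matrix_vector_mul_linear subspace_UNIV, of W'] by simp
      then have eqs: "span (range (\<lambda>y. W' *v y)) = range (\<lambda>y. W' *v y)" by (rule span_eq_iff[THEN iffD2])
      then have spW': "span (range (\<lambda>y. W' *v y)) \<subseteq> range (\<lambda>y. W' *v y)" by blast
      have "p \<notin> span (range (\<lambda>y. W' *v y))"
      proof
        assume "p \<in> span (range (\<lambda>y. W' *v y))"
        then obtain y where "p = W' *v y" using spW' by blast
        then have "p \<bullet> p = 0" using pW' by simp
        with pp show False by simp
      qed
      then have "span (range (\<lambda>y. W' *v y)) \<subset> span (range (\<lambda>y. W *v y))"
        using span_mono[OF sub] pin by blast
      then show ?thesis unfolding rank_dim_range by (rule dim_psubset)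
    qed
    obtain r' s' P' Q' where svd': "is_svd W' r' s' P' Q'" and r'le: "r' \<le> rank W'"
      using less(1)[OF rank_lt] by blast
    have W'x: "W' *v x = 0" by (simp add: W'v xx)
    have Qx: "Q' i \<bullet> x = 0" if "i < r'" for i
    proof -
      have "s' i * (Q' i \<bullet> x) = 0" using svd_left[OF svd' that, of x] W'x by simp
      moreover have "s' i > 0" using svd' that by (simp add: is_svd_def)
      ultimately show ?thesis by simp
    qed
    have Pp: "P' i \<bullet> p = 0" if "i < r'" for i
    proof -
      have "p \<bullet> (W' *v Q' i) = 0" by (rule pW')
      then have "s' i * (P' i \<bullet> p) = 0" using svd_mv[OF svd' that] by (simp add: inner_commute)
      moreover have "s' i > 0" using svd' that by (simp add: is_svd_def)
      ultimately show ?thesis by simp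
    qed
    define s2 where "s2 = s'(r' := \<sigma>)"
    define P2 where "P2 = P'(r' := p)"
    define Q2 where "Q2 = Q'(r' := x)"
    have "is_svd W (Suc r') s2 P2 Q2"
      unfolding is_svd_def
    proof (intro conjI allI impI)
      fix i assume "i < Suc r'"
      then show "0 < s2 i" using svd' \<sigma>pos by (auto simp: s2_def is_svd_def less_Suc_eq)
    next
      fix i j assume "i < Suc r'" "j < Suc r'"
      then show "P2 i \<bullet> P2 j = (if i = j then 1 else 0)"
        using svd' Pp pp by (auto simp: P2_def is_svd_def less_Suc_eq inner_commute)
    next
      fix i j assume "i < Suc r'" "j < Suc r'"
      then show "Q2 i \<bullet> Q2 j = (if i = j then 1 else 0)"
        using svd' Qx xx by (auto simp: Q2_def is_svd_def less_Suc_eq inner_commute)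
    next
      have "(\<Sum>i<Suc r'. s2 i *\<^sub>R outer (P2 i) (Q2 i)) = (\<Sum>i<r'. s' i *\<^sub>R outer (P' i) (Q' i)) + \<sigma> *\<^sub>R outer p x"
        by (simp add: s2_def P2_def Q2_def)
      also have "\<dots> = W" using svd' unfolding is_svd_def W'_def by (metis diff_add_cancel)
      finally show "W = (\<Sum>i<Suc r'. s2 i *\<^sub>R outer (P2 i) (Q2 i))" by simp
    qed
    moreover have "Suc r' \<le> rank W" using r'le rank_lt by simp
    ultimately show ?thesis by blast
  qed
qed

lemma sum_two:
  fixes F :: "'k::finite \<Rightarrow> 'a::comm_monoid_add"
  assumes "a \<noteq> b"
  shows "sum F UNIV = F a + F b + sum F (UNIV - {a, b})"
proof -
  have "sum F UNIV = F a + sum F (UNIV - {a})" by (rule sum.remove) auto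
  also have "sum F (UNIV - {a}) = F b + sum F (UNIV - {a} - {b})" using assms by (intro sum.remove) auto
  also have "UNIV - {a} - {b} = UNIV - {a, b}" by auto
  finally show ?thesis by (simp add: add.assoc)
qed

lemma rot_outer:
  fixes c s :: real
  assumes "c\<^sup>2 + s\<^sup>2 = 1"
  shows "outer (c *\<^sub>R x1 + s *\<^sub>R x2) (c *\<^sub>R y1 + s *\<^sub>R y2) + outer ((- s) *\<^sub>R x1 + c *\<^sub>R x2) ((- s) *\<^sub>R y1 + c *\<^sub>R y2)
    = outer x1 y1 + outer x2 y2"
proof -
  have "(c * a1 + s * a2) * (c * b1 + s * b2) + (- s * a1 + c * a2) * (- s * b1 + c * b2) = (c\<^sup>2 + s\<^sup>2) * (a1 * b1 + a2 * b2)"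
    for a1 a2 b1 b2 :: real by (simp add: power2_eq_square algebra_simps)
  then show ?thesis using assms by (simp add: outer_def vec_eq_iff)
qed

lemma rot_inner:
  fixes c s :: real and x y :: "'a::real_inner"
  assumes "c\<^sup>2 + s\<^sup>2 = 1"
  shows "(c *\<^sub>R x + s *\<^sub>R y) \<bullet> (c *\<^sub>R x + s *\<^sub>R y) + ((- s) *\<^sub>R x + c *\<^sub>R y) \<bullet> ((- s) *\<^sub>R x + c *\<^sub>R y)
    = x \<bullet> x + y \<bullet> y"
proof -
  have "(c *\<^sub>R x + s *\<^sub>R y) \<bullet> (c *\<^sub>R x + s *\<^sub>R y) + ((- s) *\<^sub>R x + c *\<^sub>R y) \<bullet> ((- s) *\<^sub>R x + c *\<^sub>R y)
     = (c\<^sup>2 + s\<^sup>2) * (x \<bullet> x + y \<bullet> y)"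
    by (simp add: inner_add_left inner_add_right inner_commute[of y x] power2_eq_square algebra_simps)
  then show ?thesis using assms by simp
qed

lemma rotate_step:
  fixes u :: "'k::finite \<Rightarrow> real^'m" and v :: "'k \<Rightarrow> real^'n"
  assumes G: "\<forall>i j. u i \<bullet> u j = v i \<bullet> v j" and ab: "a \<noteq> b"
    and lo: "u b \<bullet> u b \<le> \<mu>" and hi: "\<mu> \<le> u a \<bullet> u a"
  shows "\<exists>u' v'. (\<forall>i j. u' i \<bullet> u' j = v' i \<bullet> v' j)
    \<and> (\<Sum>j\<in>UNIV. outer (u' j) (v' j)) = (\<Sum>j\<in>UNIV. outer (u j) (v j))
    \<and> u' a \<bullet> u' a = \<mu> \<and> u' a \<bullet> u' a + u' b \<bullet> u' b = u a \<bullet> u a + u b \<bullet> u b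
    \<and> (\<forall>j. j \<noteq> a \<and> j \<noteq> b \<longrightarrow> u' j = u j)"
proof -
  define g where "g \<theta> = (cos \<theta> *\<^sub>R u a + sin \<theta> *\<^sub>R u b) \<bullet> (cos \<theta> *\<^sub>R u a + sin \<theta> *\<^sub>R u b)" for \<theta>
  have "continuous_on {0 .. pi/2} g" unfolding g_def by (intro continuous_intros)
  moreover have "g (pi/2) \<le> \<mu>" "\<mu> \<le> g 0" using lo hi by (simp_all add: g_def)
  ultimately obtain \<theta> where "g \<theta> = \<mu>" using IVT2'[of g "pi/2" \<mu> 0] by auto
  define c where "c = cos \<theta>"
  define s where "s = sin \<theta>"
  have cs: "c\<^sup>2 + s\<^sup>2 = 1" by (simp add: c_def s_def)
  define u' where "u' = u(a := c *\<^sub>R u a + s *\<^sub>R u b, b := (- s) *\<^sub>R u a + c *\<^sub>R u b)"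
  define v' where "v' = v(a := c *\<^sub>R v a + s *\<^sub>R v b, b := (- s) *\<^sub>R v a + c *\<^sub>R v b)"
  have "u' i \<bullet> u' j = v' i \<bullet> v' j" for i j
    using G ab by (auto simp: u'_def v'_def inner_add_left inner_add_right inner_diff_left inner_diff_right)
  moreover have "(\<Sum>j\<in>UNIV. outer (u' j) (v' j)) = (\<Sum>j\<in>UNIV. outer (u j) (v j))"
  proof -
    have "(\<Sum>j\<in>UNIV. outer (u' j) (v' j)) = outer (u' a) (v' a) + outer (u' b) (v' b) + (\<Sum>j\<in>UNIV - {a, b}. outer (u' j) (v' j))"
      by (rule sum_two[OF ab])
    also have "outer (u' a) (v' a) + outer (u' b) (v' b) = outer (u a) (v a) + outer (u b) (v b)"
      using ab rot_outer[OF cs] by (simp add: u'_def v'_def)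
    also have "(\<Sum>j\<in>UNIV - {a, b}. outer (u' j) (v' j)) = (\<Sum>j\<in>UNIV - {a, b}. outer (u j) (v j))"
      by (intro sum.cong) (auto simp: u'_def v'_def)
    also have "outer (u a) (v a) + outer (u b) (v b) + \<dots> = (\<Sum>j\<in>UNIV. outer (u j) (v j))"
      by (rule sum_two[OF ab, symmetric])
    finally show ?thesis .
  qed
  moreover have "u' a \<bullet> u' a = \<mu>" using ab \<open>g \<theta> = \<mu>\<close> by (simp add: u'_def g_def c_def s_def)
  moreover have "u' a \<bullet> u' a + u' b \<bullet> u' b = u a \<bullet> u a + u b \<bullet> u b"
    using ab rot_inner[OF cs] by (simp add: u'_def)
  moreover have "\<forall>j. j \<noteq> a \<and> j \<noteq> b \<longrightarrow> u' j = u j" by (simp add: u'_def)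
  ultimately show ?thesis by blast
qed

lemma equalize:
  fixes u :: "'k::finite \<Rightarrow> real^'m" and v :: "'k \<Rightarrow> real^'n"
  assumes "\<forall>i j. u i \<bullet> u j = v i \<bullet> v j"
    and "(\<Sum>j\<in>UNIV. u j \<bullet> u j) = real CARD('k) * \<mu>"
  shows "\<exists>(u'::'k \<Rightarrow> real^'m) (v'::'k \<Rightarrow> real^'n). (\<forall>i j. u' i \<bullet> u' j = v' i \<bullet> v' j)
    \<and> (\<Sum>j\<in>UNIV. outer (u' j) (v' j)) = (\<Sum>j\<in>UNIV. outer (u j) (v j))
    \<and> (\<forall>j. u' j \<bullet> u' j = \<mu>)"
  using assms
proof (induction "card {j. u j \<bullet> u j \<noteq> \<mu>}" arbitrary: u v rule: less_induct)
  case less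
  show ?case
  proof (cases "{j. u j \<bullet> u j \<noteq> \<mu>} = {}")
    case True
    then have "\<forall>j. u j \<bullet> u j = \<mu>" by auto
    then show ?thesis using less.prems(1) by blast
  next
    case False
    then obtain j0 where j0: "u j0 \<bullet> u j0 \<noteq> \<mu>" by blast
    have sumc: "(\<Sum>j\<in>(UNIV::'k set). \<mu>) = real CARD('k) * \<mu>" by simp
    have "\<exists>a. u a \<bullet> u a > \<mu>"
    proof (rule ccontr)
      assume "\<nexists>a. u a \<bullet> u a > \<mu> "
      then have le: "\<forall>j\<in>UNIV. u j \<bullet> u j \<le> \<mu>" by (auto simp: not_less)
      then have "u j0 \<bullet> u j0 < \<mu>" using j0 by (simp add: order_less_le)
      then have "(\<Sum>j\<in>UNIV. u j \<bullet> u j) < (\<Sum>j\<in>(UNIV::'k set). \<mu>)"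
        using le by (intro sum_strict_mono_ex1) auto
      then show False using less.prems(2) sumc by simp
    qed
    then obtain a where a: "u a \<bullet> u a > \<mu>" by blast
    have "\<exists>b. u b \<bullet> u b < \<mu>"
    proof (rule ccontr)
      assume "\<nexists>b. u b \<bullet> u b < \<mu> "
      then have le: "\<forall>j\<in>UNIV. \<mu> \<le> u j \<bullet> u j" by (auto simp: not_less)
      then have "\<mu> < u j0 \<bullet> u j0" using j0 by (simp add: order_less_le)
      then have "(\<Sum>j\<in>(UNIV::'k set). \<mu>) < (\<Sum>j\<in>UNIV. u j \<bullet> u j)"
        using le by (intro sum_strict_mono_ex1) auto
      then show False using less.prems(2) sumc by simp
    qed
    then obtain b where b: "u b \<bullet> u b < \<mu>" by blast
    have ab: "a \<noteq> b" using a b by auto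
    obtain u' v' where G': "\<forall>i j. u' i \<bullet> u' j = v' i \<bullet> v' j"
      and S': "(\<Sum>j\<in>UNIV. outer (u' j) (v' j)) = (\<Sum>j\<in>UNIV. outer (u j) (v j))"
      and A': "u' a \<bullet> u' a = \<mu>" and AB': "u' a \<bullet> u' a + u' b \<bullet> u' b = u a \<bullet> u a + u b \<bullet> u b"
      and R': "\<forall>j. j \<noteq> a \<and> j \<noteq> b \<longrightarrow> u' j = u j"
      using rotate_step[OF less.prems(1) ab less_imp_le[OF b] less_imp_le[OF a]] by (elim exE conjE) blast
    have sub: "{j. u' j \<bullet> u' j \<noteq> \<mu>} \<subset> {j. u j \<bullet> u j \<noteq> \<mu>}"
    proof
      show "{j. u' j \<bullet> u' j \<noteq> \<mu>} \<subseteq> {j. u j \<bullet> u j \<noteq> \<mu>}"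
      proof
        fix j assume "j \<in> {j. u' j \<bullet> u' j \<noteq> \<mu>}"
        then show "j \<in> {j. u j \<bullet> u j \<noteq> \<mu>}"
          using R' A' b by (cases "j = a"; cases "j = b") auto
      qed
      show "{j. u' j \<bullet> u' j \<noteq> \<mu>} \<noteq> {j. u j \<bullet> u j \<noteq> \<mu>}"
      proof
        assume "{j. u' j \<bullet> u' j \<noteq> \<mu>} = {j. u j \<bullet> u j \<noteq> \<mu>}"
        moreover have "a \<in> {j. u j \<bullet> u j \<noteq> \<mu>}" using a by simp
        moreover have "a \<notin> {j. u' j \<bullet> u' j \<noteq> \<mu>}" using A' by simp
        ultimately show False by simp
      qed
    qed
    then have lt: "card {j. u' j \<bullet> u' j \<noteq> \<mu>} < card {j. u j \<bullet> u j \<noteq> \<mu>}"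
      by (intro psubset_card_mono) auto
    have "(\<Sum>j\<in>UNIV. u' j \<bullet> u' j) = (\<Sum>j\<in>UNIV. u j \<bullet> u j)"
    proof -
      have "(\<Sum>j\<in>UNIV. u' j \<bullet> u' j) = u' a \<bullet> u' a + u' b \<bullet> u' b + (\<Sum>j\<in>UNIV - {a, b}. u' j \<bullet> u' j)"
        by (rule sum_two[OF ab])
      also have "(\<Sum>j\<in>UNIV - {a, b}. u' j \<bullet> u' j) = (\<Sum>j\<in>UNIV - {a, b}. u j \<bullet> u j)"
        using R' by (intro sum.cong) auto
      also note AB'
      also have "u a \<bullet> u a + u b \<bullet> u b + (\<Sum>j\<in>UNIV - {a, b}. u j \<bullet> u j) = (\<Sum>j\<in>UNIV. u j \<bullet> u j)"
        by (rule sum_two[OF ab, symmetric])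
      finally show ?thesis .
    qed
    then have "(\<Sum>j\<in>UNIV. u' j \<bullet> u' j) = real CARD('k) * \<mu>" using less.prems(2) by simp
    from less.hyps[OF lt G' this] obtain u2 :: "'k \<Rightarrow> real^'m" and v2 :: "'k \<Rightarrow> real^'n" where
      "\<forall>i j. u2 i \<bullet> u2 j = v2 i \<bullet> v2 j"
      "(\<Sum>j\<in>UNIV. outer (u2 j) (v2 j)) = (\<Sum>j\<in>UNIV. outer (u' j) (v' j))"
      "\<forall>j. u2 j \<bullet> u2 j = \<mu>" by blast
    with S' show ?thesis by (metis (no_types))
  qed
qed

lemma mult_transpose_outer:
  fixes U :: "real^'k^'m" and V :: "real^'k^'n"
  shows "U ** transpose V = (\<Sum>j\<in>UNIV. outer (column j U) (column j V))"
  by (simp add: matrix_matrix_mult_def transpose_def outer_def column_def vec_eq_iff sum_component)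

lemma outer_scaleR_right: "outer p (c *\<^sub>R q) = c *\<^sub>R outer p q"
  by (simp add: outer_def vec_eq_iff)

lemma key_ineq:
  fixes a :: "'k::finite \<Rightarrow> real"
  assumes S0: "0 \<le> S" and Sle: "S \<le> (\<Sum>j\<in>UNIV. a j)"
  shows "S\<^sup>2 / real CARD('k) \<le> (\<Sum>j\<in>UNIV. (a j)\<^sup>2)"
    and "(\<Sum>j\<in>UNIV. (a j)\<^sup>2) = S\<^sup>2 / real CARD('k) \<Longrightarrow> \<forall>j. a j = S / real CARD('k)"
proof -
  define K where "K = real CARD('k)"
  have K: "K > 0" by (simp add: K_def)
  define m where "m = S / K"
  have eq: "(\<Sum>j\<in>UNIV. (a j - m)\<^sup>2) = (\<Sum>j\<in>UNIV. (a j)\<^sup>2) - 2 * m * (\<Sum>j\<in>UNIV. a j) + K * m\<^sup>2"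
  proof -
    have "(\<Sum>j\<in>UNIV. (a j - m)\<^sup>2) = (\<Sum>j\<in>UNIV. (a j)\<^sup>2 - (2 * m) * a j + m\<^sup>2)"
      by (intro sum.cong refl) (simp add: power2_diff mult_ac)
    also have "\<dots> = (\<Sum>j\<in>UNIV. (a j)\<^sup>2) - (2 * m) * (\<Sum>j\<in>UNIV. a j) + K * m\<^sup>2"
      by (simp only: sum.distrib sum_subtractf sum_distrib_left[symmetric]) (simp add: K_def)
    finally show ?thesis .
  qed
  have Km: "K * m\<^sup>2 = S\<^sup>2 / K" using K by (simp add: m_def power2_eq_square)
  have mS: "2 * m * S = 2 * (S\<^sup>2 / K)" using K by (simp add: m_def power2_eq_square)
  have m0: "m \<ge> 0" using S0 K by (simp add: m_def)
  have "2 * m * S \<le> 2 * m * (\<Sum>j\<in>UNIV. a j)" using Sle m0 by (simp add: mult_left_mono)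
  then have up: "(\<Sum>j\<in>UNIV. (a j - m)\<^sup>2) \<le> (\<Sum>j\<in>UNIV. (a j)\<^sup>2) - S\<^sup>2 / K"
    using eq Km mS by linarith
  have "0 \<le> (\<Sum>j\<in>UNIV. (a j - m)\<^sup>2)" by (simp add: sum_nonneg)
  with up show "S\<^sup>2 / real CARD('k) \<le> (\<Sum>j\<in>UNIV. (a j)\<^sup>2)" by (simp add: K_def)
  assume "(\<Sum>j\<in>UNIV. (a j)\<^sup>2) = S\<^sup>2 / real CARD('k)"
  then have "(\<Sum>j\<in>UNIV. (a j - m)\<^sup>2) = 0" using up \<open>0 \<le> (\<Sum>j\<in>UNIV. (a j - m)\<^sup>2)\<close>
    by (simp add: K_def)
  then have "\<forall>j\<in>UNIV. (a j - m)\<^sup>2 = 0" by (subst (asm) sum_nonneg_eq_0_iff) auto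
  then show "\<forall>j. a j = S / real CARD('k)" by (simp add: m_def K_def)
qed

lemma construct:
  fixes W :: "real^'n^'m"
  assumes svd: "is_svd W r s P Q" and rk: "r \<le> CARD('k::finite)"
  shows "\<exists>(U::real^'k^'m) (V::real^'k^'n). U ** transpose V = W \<and>
     (\<forall>j. norm (column j U) * norm (column j V) = (\<Sum>i<r. s i) / real CARD('k))"
proof -
  obtain g :: "'k \<Rightarrow> nat" where g: "bij_betw g UNIV {0..<CARD('k)}"
    using ex_bij_betw_finite_nat[of "UNIV :: 'k set"] by auto
  have sp: "\<forall>i<r. 0 < s i" and Po: "\<forall>i<r. \<forall>j<r. P i \<bullet> P j = (if i = j then 1 else 0)"
    and Qo: "\<forall>i<r. \<forall>j<r. Q i \<bullet> Q j = (if i = j then 1 else 0)"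
    and Wd: "W = (\<Sum>i<r. s i *\<^sub>R outer (P i) (Q i))" using svd by (auto simp: is_svd_def)
  define u where "u j = (if g j < r then sqrt (s (g j)) *\<^sub>R P (g j) else 0)" for j
  define v where "v j = (if g j < r then sqrt (s (g j)) *\<^sub>R Q (g j) else 0)" for j
  have G: "\<forall>i j. u i \<bullet> u j = v i \<bullet> v j"
    using Po Qo by (auto simp: u_def v_def)
  have ss: "sqrt (s i) * sqrt (s i) = s i" if "i < r" for i
    using sp that by (simp add: less_imp_le)
  have reidx: "(\<Sum>j\<in>UNIV. h (g j)) = (\<Sum>i<r. h i)" if "\<forall>i. r \<le> i \<longrightarrow> h i = 0" for h :: "nat \<Rightarrow> 'b::comm_monoid_add"
  proof -
    have "(\<Sum>j\<in>UNIV. h (g j)) = (\<Sum>i\<in>{0..<CARD('k)}. h i)" by (rule sum.reindex_bij_betw[OF g])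
    also have "\<dots> = (\<Sum>i<r. h i)"
      using rk that by (intro sum.mono_neutral_cong_right) auto
    finally show ?thesis .
  qed
  have "(\<Sum>j\<in>UNIV. outer (u j) (v j)) = (\<Sum>j\<in>UNIV. (\<lambda>i. if i < r then s i *\<^sub>R outer (P i) (Q i) else 0) (g j))"
    using ss by (intro sum.cong refl) (auto simp: u_def v_def outer_scaleR_left outer_scaleR_right outer_def vec_eq_iff)
  also have "\<dots> = W" unfolding Wd by (subst reidx) auto
  finally have SW: "(\<Sum>j\<in>UNIV. outer (u j) (v j)) = W" .
  have "(\<Sum>j\<in>UNIV. u j \<bullet> u j) = (\<Sum>j\<in>UNIV. (\<lambda>i. if i < r then s i else 0) (g j))"
    using ss Po by (intro sum.cong refl) (auto simp: u_def)
  also have "\<dots> = (\<Sum>i<r. s i)" by (subst reidx) auto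
  finally have "(\<Sum>j\<in>UNIV. u j \<bullet> u j) = real CARD('k) * ((\<Sum>i<r. s i) / real CARD('k))" by simp
  from equalize[OF G this] obtain u' :: "'k \<Rightarrow> real^'m" and v' :: "'k \<Rightarrow> real^'n" where
    G': "\<forall>i j. u' i \<bullet> u' j = v' i \<bullet> v' j" and
    S': "(\<Sum>j\<in>UNIV. outer (u' j) (v' j)) = (\<Sum>j\<in>UNIV. outer (u j) (v j))" and
    E': "\<forall>j. u' j \<bullet> u' j = (\<Sum>i<r. s i) / real CARD('k)" by blast
  define U :: "real^'k^'m" where "U = (\<chi> i j. u' j $ i)"
  define V :: "real^'k^'n" where "V = (\<chi> i j. v' j $ i)"
  have cU: "column j U = u' j" and cV: "column j V = v' j" for j
    by (simp_all add: U_def V_def column_def vec_eq_iff)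
  have "U ** transpose V = W" using S' SW by (simp add: mult_transpose_outer cU cV)
  moreover have "norm (column j U) * norm (column j V) = (\<Sum>i<r. s i) / real CARD('k)" for j
  proof -
    have "norm (column j U) * norm (column j V) = sqrt (u' j \<bullet> u' j) * sqrt (v' j \<bullet> v' j)"
      by (simp add: cU cV norm_eq_sqrt_inner)
    also have "\<dots> = u' j \<bullet> u' j" using G' by simp
    also have "\<dots> = (\<Sum>i<r. s i) / real CARD('k)" using E' by simp
    finally show ?thesis .
  qed
  ultimately show ?thesis by blast
qed

theorem lemmaB5:
  fixes W :: "real^'n^'m"
  assumes "rank W \<le> CARD('k::finite)"
  shows "Fk W TYPE('k) = (nuclear_norm W)\<^sup>2 / real CARD('k)
    \<and> (\<exists>(U::real^'k^'m) (V::real^'k^'n). U ** transpose V = W \<and> obj U V = Fk W TYPE('k))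
    \<and> (\<forall>(U::real^'k^'m) (V::real^'k^'n).
          U ** transpose V = W \<and> obj U V = Fk W TYPE('k) \<longrightarrow>
            (\<forall>j. norm (column j U) * norm (column j V) = nuclear_norm W / real CARD('k))
            \<and> (\<Sum>j\<in>UNIV. norm (column j U) * norm (column j V)) = nuclear_norm W)"
proof -
  obtain r s P Q where svd: "is_svd W r s P Q" and rle: "r \<le> rank W" using svd_exists by blast
  define S where "S = nuclear_norm W"
  have SS: "S = (\<Sum>i<r. s i)" using nuclear_eq[OF svd] by (simp add: S_def)
  have S0: "0 \<le> S" using svd unfolding SS is_svd_def by (auto intro: sum_nonneg less_imp_le)
  define K where "K = real CARD('k)"
  have objeq: "obj U V = (\<Sum>j\<in>UNIV. (norm (column j U) * norm (column j V))\<^sup>2)" for U :: "real^'k^'m" and V :: "real^'k^'n"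
    by (simp add: obj_def power_mult_distrib)
  have LB: "S \<le> (\<Sum>j\<in>UNIV. norm (column j U) * norm (column j V))"
    if "U ** transpose V = W" for U :: "real^'k^'m" and V :: "real^'k^'n"
    unfolding SS by (rule svd_lower[OF svd]) (use that mult_transpose_outer in auto)
  have lowb: "S\<^sup>2 / K \<le> obj U V" if "U ** transpose V = W" for U :: "real^'k^'m" and V :: "real^'k^'n"
    unfolding objeq K_def by (rule key_ineq(1)[OF S0 LB[OF that]])
  obtain U0 :: "real^'k^'m" and V0 :: "real^'k^'n" where U0: "U0 ** transpose V0 = W"
    and E0: "\<forall>j. norm (column j U0) * norm (column j V0) = S / K"
    using construct[OF svd, where 'k='k] rle assms unfolding SS K_def by force
  have obj0: "obj U0 V0 = S\<^sup>2 / K"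
    using E0 by (simp add: objeq K_def power2_eq_square)
  have F: "Fk W TYPE('k) = S\<^sup>2 / K"
  proof -
    have mem: "S\<^sup>2 / K \<in> {obj (U :: real^'k^'m) (V :: real^'k^'n) | U V. U ** transpose V = W}"
      using U0 obj0[symmetric] by blast
    show ?thesis unfolding Fk_def
      by (rule cInf_eq_minimum[OF mem]) (use lowb in blast)
  qed
  have third: "(\<forall>j. norm (column j U) * norm (column j V) = nuclear_norm W / real CARD('k))
            \<and> (\<Sum>j\<in>UNIV. norm (column j U) * norm (column j V)) = nuclear_norm W"
    if H: "U ** transpose V = W \<and> obj U V = Fk W TYPE('k)" for U :: "real^'k^'m" and V :: "real^'k^'n"
  proof -
    have "(\<Sum>j\<in>UNIV. (norm (column j U) * norm (column j V))\<^sup>2) = S\<^sup>2 / real CARD('k)"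
      using H F objeq by (simp add: K_def)
    from key_ineq(2)[OF S0 LB this] H
    have E: "\<forall>j. norm (column j U) * norm (column j V) = S / real CARD('k)" by blast
    then show ?thesis by (simp add: S_def)
  qed
  have first: "Fk W TYPE('k) = (nuclear_norm W)\<^sup>2 / real CARD('k)" using F by (simp add: S_def K_def)
  have second: "\<exists>(U::real^'k^'m) (V::real^'k^'n). U ** transpose V = W \<and> obj U V = Fk W TYPE('k)"
    using U0 obj0 F by auto
  show ?thesis using first second third by blast
qed

end
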